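(* Let $\mu>0$ and fix $s\in\mathcal{S}$. Suppose the quasi-optimal action-value function is concavely quadratic in the action: $Q^{*}_{\mu}(s,a)=-\alpha_1 a^2+\alpha_2 a+\alpha_3$ for all $a\in\mathbb{R}$, with constants (depending on $s$) $\alpha_1>0$, $\alpha_2,\alpha_3\in\mathbb{R}$. Let $\pi^{*}_{\mu}(\cdot\mid s)$ be the induced policy, i.e. a probability density on $\mathbb{R}$ whose support $\mathcal{W}_s$ (closure of $\{a:\pi^{*}_{\mu}(a\mid s)>0\}$) satisfies $0<\sigma(\mathcal{W}_s)<\infty$ and such that for all $a\in\mathbb{R}$ $$\pi^{*}_{\mu}(a\mid s)=\Big(\frac{Q^{*}_{\mu}(s,a)}{2\mu}-\frac{\int_{\mathcal{W}_s}Q^{*}_{\mu}(s,a')\,da'}{2\mu\,\sigma(\mathcal{W}_s)}+\frac{1}{\sigma(\mathcal{W}_s)}\Big)^{+}.$$ Then $\pi^{*}_{\mu}(\cdot\mid s)$ is a $q$-Gaussian density $$\pi^{*}_{\mu}(a\mid s)=\Big(\frac{3}{2}\Big(\frac{\alpha_1}{12\mu}\Big)^{1/3}-\frac{\alpha_1}{2\mu}\Big(a-\frac{\alpha_2}{2\alpha_1}\Big)^2\Big)^{+},$$ with support $$\mathcal{W}_s=\Big[\frac{\alpha_2-(12\alpha_1^2\mu)^{1/3}}{2\alpha_1},\ \frac{\alpha_2+(12\alpha_1^2\mu)^{1/3}}{2\alpha_1}\Big].$$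
   Context: $\sigma$ denotes Lebesgue measure on $\mathbb{R}$ and $x^{+}=\max(x,0)$. The action space is $\mathcal{A}=\mathbb{R}$. $Q^{*}_{\mu}$ is the quasi-optimal action-value function of a Markov decision process, here assumed to have the stated quadratic form at the state $s$. *)

theory Defs
  imports "HOL-Analysis.Analysis"
begin

end

theory Submission
  imports Defs
begin

theorem theorem2:
  fixes \<mu> \<alpha>1 \<alpha>2 \<alpha>3 :: real
    and Q \<pi> :: "real \<Rightarrow> real"
    and W :: "real set"
  assumes mu_pos: "\<mu> > 0"
    and a1_pos: "\<alpha>1 > 0"
    and Q_quad: "\<And>a. Q a = - \<alpha>1 * a\<^sup>2 + \<alpha>2 * a + \<alpha>3"
    and pi_nonneg: "\<And>a. \<pi> a \<ge> 0"
    and pi_meas: "\<pi> \<in> borel_measurable lborel"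
    and pi_int: "integrable lborel \<pi>"
    and pi_norm: "(\<integral>a. \<pi> a \<partial>lborel) = 1"
    and W_def: "W = closure {a. \<pi> a > 0}"
    and W_pos: "emeasure lborel W > 0"
    and W_fin: "emeasure lborel W < \<infinity>"
    and fixpoint: "\<And>a. \<pi> a = max 0
        (Q a / (2 * \<mu>) - (LINT a':W|lborel. Q a') / (2 * \<mu> * measure lborel W)
         + 1 / measure lborel W)"
  shows "(\<forall>a. \<pi> a = max 0 (3 / 2 * (\<alpha>1 / (12 * \<mu>)) powr (1/3)
                 - \<alpha>1 / (2 * \<mu>) * (a - \<alpha>2 / (2 * \<alpha>1))\<^sup>2))
       \<and> W = {(\<alpha>2 - (12 * \<alpha>1\<^sup>2 * \<mu>) powr (1/3)) / (2 * \<alpha>1) ..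
               (\<alpha>2 + (12 * \<alpha>1\<^sup>2 * \<mu>) powr (1/3)) / (2 * \<alpha>1)}"
proof -
  define D where "D = - (LINT a':W|lborel. Q a') / (2 * \<mu> * measure lborel W)
         + 1 / measure lborel W"
  define k where "k = \<alpha>1 / (2 * \<mu>)"
  define m where "m = \<alpha>2 / (2 * \<alpha>1)"
  define c where "c = (\<alpha>2\<^sup>2 / (4 * \<alpha>1) + \<alpha>3) / (2 * \<mu>) + D"
  have kpos: "k > 0" using mu_pos a1_pos by (simp add: k_def)
  have pi_eq: "\<pi> a = max 0 (c - k * (a - m)\<^sup>2)" for a
  proof -
    have "Q a / (2 * \<mu>) = (\<alpha>2\<^sup>2 / (4 * \<alpha>1) + \<alpha>3) / (2 * \<mu>) - k * (a - m)\<^sup>2"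
      using mu_pos a1_pos unfolding Q_quad k_def m_def
      by (simp add: field_simps power2_eq_square)
    then show ?thesis using fixpoint[of a] unfolding c_def D_def by simp
  qed
  have cpos: "c > 0"
  proof (rule ccontr)
    assume "\<not> c > 0"
    then have "\<pi> a = 0" for a
    proof -
      have "k * (a - m)\<^sup>2 \<ge> 0" using kpos by simp
      then show ?thesis using pi_eq[of a] \<open>\<not> c > 0\<close> by (simp add: max_def)
    qed
    then show False using pi_norm by simp
  qed
  define r where "r = sqrt (c / k)"
  have rpos: "r > 0" using cpos kpos by (simp add: r_def)
  have kr2: "k * r\<^sup>2 = c" using cpos kpos by (simp add: r_def)
  have pos_iff: "\<pi> a > 0 \<longleftrightarrow> a \<in> {m - r <..< m + r}" for a
  proof -
    have "\<pi> a > 0 \<longleftrightarrow> k * (a - m)\<^sup>2 < k * r\<^sup>2" using pi_eq[of a] kr2 by auto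
    also have "\<dots> \<longleftrightarrow> (a - m)\<^sup>2 < r\<^sup>2" using kpos by simp
    also have "\<dots> \<longleftrightarrow> \<bar>a - m\<bar> < r" using rpos
      by (metis abs_le_square_iff abs_of_pos not_le)
    also have "\<dots> \<longleftrightarrow> a \<in> {m - r <..< m + r}" by auto
    finally show ?thesis .
  qed
  have Weq: "W = {m - r .. m + r}"
  proof -
    have "{a. \<pi> a > 0} = {m - r <..< m + r}" using pos_iff by blast
    then show ?thesis unfolding W_def using rpos by simp
  qed
  define g where "g = (\<lambda>a. c - k * (a - m)\<^sup>2)"
  define F where "F = (\<lambda>a. c * a - k * (a - m)^3 / 3)"
  have "(g has_integral (F (m + r) - F (m - r))) {m - r .. m + r}"
  proof (rule fundamental_theorem_of_calculus)
    show "m - r \<le> m + r" using rpos by simp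
    fix x assume "x \<in> {m - r .. m + r}"
    show "(F has_vector_derivative g x) (at x within {m - r .. m + r})"
      unfolding F_def g_def has_real_derivative_iff_has_vector_derivative[symmetric]
      by (auto intro!: derivative_eq_intros simp: power2_eq_square)
  qed
  moreover have "F (m + r) - F (m - r) = 4 * k * r^3 / 3"
    unfolding F_def using kr2[symmetric] by (simp add: algebra_simps power2_eq_square power3_eq_cube)
  ultimately have "(g has_integral 4 * k * r^3 / 3) {m - r .. m + r}" by simp
  then have "((\<lambda>a. if a \<in> {m - r .. m + r} then g a else 0) has_integral 4 * k * r^3 / 3) UNIV"
    by (subst has_integral_restrict_UNIV)
  moreover have "(\<lambda>a. if a \<in> {m - r .. m + r} then g a else 0) = \<pi>"
  proof
    fix a
    show "(if a \<in> {m - r .. m + r} then g a else 0) = \<pi> a"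
    proof (cases "a \<in> {m - r <..< m + r}")
      case True
      then show ?thesis using pos_iff[of a] pi_eq[of a] unfolding g_def by auto
    next
      case False
      then have "\<pi> a = 0" using pos_iff[of a] pi_nonneg[of a] by auto
      moreover have "a \<in> {m - r .. m + r} \<Longrightarrow> g a = 0"
        using False kr2 unfolding g_def by (auto simp: power2_eq_square algebra_simps)
      ultimately show ?thesis by auto
    qed
  qed
  ultimately have "(\<pi> has_integral 4 * k * r^3 / 3) UNIV" by simp
  then have "4 * k * r^3 / 3 = 1"
    using integral_lborel[OF pi_int] pi_norm by (simp add: has_integral_iff)
  then have r3: "r^3 = 3 * \<mu> / (2 * \<alpha>1)" using mu_pos a1_pos unfolding k_def
    by (simp add: field_simps)
  define R where "R = (12 * \<alpha>1\<^sup>2 * \<mu>) powr (1/3)"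
  define S where "S = (\<alpha>1 / (12 * \<mu>)) powr (1/3)"
  have R3: "R^3 = 12 * \<alpha>1\<^sup>2 * \<mu>" unfolding R_def using mu_pos a1_pos
    by (simp add: powr_power)
  have S3: "S^3 = \<alpha>1 / (12 * \<mu>)" unfolding S_def using mu_pos a1_pos
    by (simp add: powr_power)
  have Rpos: "R \<ge> 0" "S \<ge> 0" unfolding R_def S_def by auto
  have rR: "r = R / (2 * \<alpha>1)"
  proof -
    have "r^3 = (R / (2 * \<alpha>1))^3" using r3 R3 a1_pos
      by (simp add: power_divide field_simps power2_eq_square power3_eq_cube)
    then show ?thesis using rpos Rpos a1_pos by (simp add: power_eq_iff_eq_base)
  qed
  have cS: "c = 3 / 2 * S"
  proof -
    have "c^3 = (k * r\<^sup>2)^3" using kr2 by simp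
    also have "\<dots> = k^3 * (r^3)^2" by (simp add: power_mult_distrib power_mult[symmetric] mult.commute)
    also have "\<dots> = (\<alpha>1 / (2 * \<mu>))^3 * (3 * \<mu> / (2 * \<alpha>1))^2" unfolding r3 k_def ..
    also have "\<dots> = 9 * \<alpha>1 / (32 * \<mu>)" using mu_pos a1_pos
      by (simp add: power_divide field_simps power2_eq_square power3_eq_cube)
    also have "\<dots> = (3 / 2 * S)^3" using S3 mu_pos a1_pos
      by (simp add: power_mult_distrib field_simps)
    finally show ?thesis using cpos Rpos by (simp add: power_eq_iff_eq_base)
  qed
  show ?thesis
  proof
    show "\<forall>a. \<pi> a = max 0 (3 / 2 * (\<alpha>1 / (12 * \<mu>)) powr (1/3)
                 - \<alpha>1 / (2 * \<mu>) * (a - \<alpha>2 / (2 * \<alpha>1))\<^sup>2)"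
      using pi_eq cS unfolding S_def k_def m_def by simp
    show "W = {(\<alpha>2 - (12 * \<alpha>1\<^sup>2 * \<mu>) powr (1/3)) / (2 * \<alpha>1) ..
               (\<alpha>2 + (12 * \<alpha>1\<^sup>2 * \<mu>) powr (1/3)) / (2 * \<alpha>1)}"
      unfolding Weq rR m_def R_def[symmetric] using a1_pos by (simp add: diff_divide_distrib add_divide_distrib)
  qed
qed

end
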